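(* If $G$ is a finitely generated group of exponential growth, then $\mathrm{WP}_G\notin\mathrm{DTIME}_1(o(n^2))$.
   Context: $\mathrm{WP}_G$ is the word problem $\{w\in S^{*}: w=_G e\}$ for a finite symmetric generating set $S$. $\mathrm{DTIME}_1(o(n^2))$ is the class of languages decided by a deterministic single-tape Turing machine in time $o(n^2)$. $G$ has exponential growth if its growth function $\gamma(n)=\#\{g: l_S(g)\le n\}$ satisfies $\gamma(n)\ge a^n$ for some $a>1$ and all $n$. *)

theory Defs
  imports "HOL-Algebra.Algebra" "HOL-Library.Landau_Symbols"
begin

definition word_eval :: "('a, 'b) monoid_scheme \<Rightarrow> 'a list \<Rightarrow> 'a" where
  "word_eval G w = foldr (\<lambda>x y. x \<otimes>\<^bsub>G\<^esub> y) w \<one>\<^bsub>G\<^esub>"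

definition finite_symmetric_generating_set :: "('a, 'b) monoid_scheme \<Rightarrow> 'a set \<Rightarrow> bool" where
  "finite_symmetric_generating_set G S \<longleftrightarrow>
     finite S \<and> S \<subseteq> carrier G \<and> (\<forall>s\<in>S. inv\<^bsub>G\<^esub> s \<in> S) \<and> generate G S = carrier G"

definition word_problem :: "('a, 'b) monoid_scheme \<Rightarrow> 'a set \<Rightarrow> 'a list set" where
  "word_problem G S = {w \<in> lists S. word_eval G w = \<one>\<^bsub>G\<^esub>}"

definition word_length :: "('a, 'b) monoid_scheme \<Rightarrow> 'a set \<Rightarrow> 'a \<Rightarrow> nat" where
  "word_length G S g = (LEAST n. \<exists>w\<in>lists S. length w = n \<and> word_eval G w = g)"

definition growth :: "('a, 'b) monoid_scheme \<Rightarrow> 'a set \<Rightarrow> nat \<Rightarrow> nat" where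
  "growth G S n = card {g \<in> carrier G. word_length G S g \<le> n}"

definition exponential_growth :: "('a, 'b) monoid_scheme \<Rightarrow> 'a set \<Rightarrow> bool" where
  "exponential_growth G S \<longleftrightarrow> (\<exists>a::real. a > 1 \<and> (\<forall>n. real (growth G S n) \<ge> a ^ n))"

datatype dir = Left | Right | Stay

fun dir_shift :: "dir \<Rightarrow> int" where
  "dir_shift Left = -1" | "dir_shift Right = 1" | "dir_shift Stay = 0"

text \<open>States and tape symbols are coded as natural numbers; the input alphabet
  (of type 'a) is embedded into the tape alphabet by enc. The tape is two-way infinite.\<close>
record 'a tm =
  states :: "nat set"
  tape_alph :: "nat set"
  blank :: nat
  start :: nat
  acc :: nat
  rej :: nat
  delta :: "nat \<Rightarrow> nat \<Rightarrow> nat \<times> nat \<times> dir"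
  enc :: "'a \<Rightarrow> nat"

definition wf_tm :: "'a set \<Rightarrow> 'a tm \<Rightarrow> bool" where
  "wf_tm \<Sigma> M \<longleftrightarrow> finite (states M) \<and> finite (tape_alph M) \<and>
     start M \<in> states M \<and> acc M \<in> states M \<and> rej M \<in> states M \<and> acc M \<noteq> rej M \<and>
     blank M \<in> tape_alph M \<and> enc M ` \<Sigma> \<subseteq> tape_alph M \<and> blank M \<notin> enc M ` \<Sigma> \<and>
     inj_on (enc M) \<Sigma> \<and>
     (\<forall>q\<in>states M. \<forall>s\<in>tape_alph M. fst (delta M q s) \<in> states M \<and>
                                       fst (snd (delta M q s)) \<in> tape_alph M)"

type_synonym config = "nat \<times> (int \<Rightarrow> nat) \<times> int"

fun tm_step :: "'a tm \<Rightarrow> config \<Rightarrow> config" where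
  "tm_step M (q, tp, h) =
     (if q = acc M \<or> q = rej M then (q, tp, h)
      else (case delta M q (tp h) of (q', s, d) \<Rightarrow> (q', tp(h := s), h + dir_shift d)))"

definition tm_init :: "'a tm \<Rightarrow> 'a list \<Rightarrow> config" where
  "tm_init M w = (start M,
     (\<lambda>i. if 0 \<le> i \<and> i < int (length w) then enc M (w ! nat i) else blank M), 0)"

definition tm_run :: "'a tm \<Rightarrow> 'a list \<Rightarrow> nat \<Rightarrow> config" where
  "tm_run M w k = (tm_step M ^^ k) (tm_init M w)"

definition halts_within :: "'a tm \<Rightarrow> 'a list \<Rightarrow> nat \<Rightarrow> bool" where
  "halts_within M w k \<longleftrightarrow> fst (tm_run M w k) \<in> {acc M, rej M}"

definition accepts :: "'a tm \<Rightarrow> 'a list \<Rightarrow> bool" where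
  "accepts M w \<longleftrightarrow> (\<exists>k. fst (tm_run M w k) = acc M)"

definition decides_in_time :: "'a set \<Rightarrow> 'a tm \<Rightarrow> 'a list set \<Rightarrow> (nat \<Rightarrow> nat) \<Rightarrow> bool" where
  "decides_in_time \<Sigma> M L T \<longleftrightarrow> wf_tm \<Sigma> M \<and>
     (\<forall>w\<in>lists \<Sigma>. halts_within M w (T (length w)) \<and> (accepts M w \<longleftrightarrow> w \<in> L))"

definition DTIME1_o_n2 :: "'a set \<Rightarrow> 'a list set \<Rightarrow> bool" where
  "DTIME1_o_n2 \<Sigma> L \<longleftrightarrow>
     (\<exists>(M :: 'a tm) (T :: nat \<Rightarrow> nat).
        (\<lambda>n. real (T n)) \<in> o(\<lambda>n. real n ^ 2) \<and> decides_in_time \<Sigma> M L T)"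

end

theory Submission
  imports Defs
begin

definition isrun :: "'a tm \<Rightarrow> (nat \<Rightarrow> config) \<Rightarrow> bool" where
  "isrun M R \<longleftrightarrow> (\<forall>t. R (Suc t) = tm_step M (R t))"

abbreviation hd_of :: "config \<Rightarrow> int" where "hd_of c \<equiv> snd (snd c)"
abbreviation tape_of :: "config \<Rightarrow> int \<Rightarrow> nat" where "tape_of c \<equiv> fst (snd c)"

definition cs :: "(int \<Rightarrow> bool) \<Rightarrow> (nat \<Rightarrow> config) \<Rightarrow> nat \<Rightarrow> nat list" where
  "cs L R t = map (\<lambda>i. fst (R (Suc i)))
     (filter (\<lambda>i. L (hd_of (R i)) \<noteq> L (hd_of (R (Suc i)))) [0..<t])"

lemma cs_0[simp]: "cs L R 0 = []" by (simp add: cs_def)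

lemma cs_Suc: "cs L R (Suc t) = cs L R t @
   (if L (hd_of (R t)) \<noteq> L (hd_of (R (Suc t))) then [fst (R (Suc t))] else [])"
  by (simp add: cs_def)

lemma cs_neg: "cs (\<lambda>h. \<not> L h) R t = cs L R t"
  by (simp add: cs_def)

lemma cs_prefix: "t \<le> t' \<Longrightarrow> \<exists>zs. cs L R t' = cs L R t @ zs"
proof (induction t' rule: dec_induct)
  case base then show ?case by auto
next
  case (step n) then show ?case by (auto simp: cs_Suc)
qed

lemma step_halted: "fst c \<in> {acc M, rej M} \<Longrightarrow> tm_step M c = c"
  by (cases c) auto

lemma step_local:
  assumes "fst c = fst d" "hd_of c = hd_of d" "tape_of c (hd_of c) = tape_of d (hd_of d)"
  shows "fst (tm_step M c) = fst (tm_step M d) \<and> hd_of (tm_step M c) = hd_of (tm_step M d) \<and>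
     (\<forall>i. tape_of c i = tape_of d i \<longrightarrow> tape_of (tm_step M c) i = tape_of (tm_step M d) i)"
  using assms by (cases c; cases d) (auto split: prod.splits)

lemma step_frame:
  "(\<forall>i. i \<noteq> hd_of c \<longrightarrow> tape_of (tm_step M c) i = tape_of c i) \<and> \<bar>hd_of (tm_step M c) - hd_of c\<bar> \<le> 1"
proof (cases c)
  case (fields q tp h)
  show ?thesis
  proof (cases "delta M q (tp h)")
    case (fields q' s d) then show ?thesis using \<open>c = (q,tp,h)\<close> by (cases d) auto
  qed
qed

lemma run_absorb:
  assumes "isrun M R" "fst (R t) \<in> {acc M, rej M}"
  shows "R (t + k) = R t"
  using assms by (induction k) (auto simp: isrun_def step_halted)

lemma run_absorb':
  assumes "isrun M R" "fst (R t) \<in> {acc M, rej M}" "t \<le> t'"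
  shows "R t' = R t"
  using run_absorb[OF assms(1,2), of "t' - t"] assms(3) by simp

lemma no_cross:
  assumes R: "isrun M R" and "tp \<le> t" and L0: "L (hd_of (R tp))"
    and nc: "\<forall>j. tp \<le> j \<and> j < t \<longrightarrow> L (hd_of (R j)) = L (hd_of (R (Suc j)))"
  shows "L (hd_of (R t)) \<and> (\<forall>i. \<not> L i \<longrightarrow> tape_of (R t) i = tape_of (R tp) i) \<and> cs L R t = cs L R tp"
  using assms(2) nc
proof (induction t rule: dec_induct)
  case base then show ?case using L0 by simp
next
  case (step n)
  then have IH: "L (hd_of (R n))" "\<forall>i. \<not> L i \<longrightarrow> tape_of (R n) i = tape_of (R tp) i" "cs L R n = cs L R tp"
    by auto
  have nn: "L (hd_of (R n)) = L (hd_of (R (Suc n)))" using step by auto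
  have fr: "\<forall>i. i \<noteq> hd_of (R n) \<longrightarrow> tape_of (R (Suc n)) i = tape_of (R n) i"
    using step_frame[where c="R n" and M=M] R by (simp add: isrun_def)
  show ?case
  proof (intro conjI allI impI)
    show "L (hd_of (R (Suc n)))" using IH nn by simp
    fix i assume "\<not> L i"
    then have "i \<noteq> hd_of (R n)" using IH by auto
    then show "tape_of (R (Suc n)) i = tape_of (R tp) i" using fr IH \<open>\<not> L i\<close> by simp
  next
    show "cs L R (Suc n) = cs L R tp" using IH nn by (simp add: cs_Suc)
  qed
qed

lemma find_cross:
  assumes R: "isrun M R" and "tp \<le> Tp" and L0: "L (hd_of (R tp))"
    and len: "length (cs L R tp) < length (cs L R Tp)"
  shows "\<exists>t'. tp \<le> t' \<and> t' < Tp \<and> L (hd_of (R t')) \<and> \<not> L (hd_of (R (Suc t'))) \<and>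
     (\<forall>i. \<not> L i \<longrightarrow> tape_of (R t') i = tape_of (R tp) i) \<and> cs L R t' = cs L R tp"
proof -
  define P where "P j \<longleftrightarrow> tp \<le> j \<and> L (hd_of (R j)) \<noteq> L (hd_of (R (Suc j)))" for j
  have ex: "\<exists>j. P j \<and> j < Tp"
  proof (rule ccontr)
    assume "\<not> ?thesis"
    then have "\<forall>j. tp \<le> j \<and> j < Tp \<longrightarrow> L (hd_of (R j)) = L (hd_of (R (Suc j)))"
      unfolding P_def by auto
    from no_cross[OF R \<open>tp \<le> Tp\<close> L0 this] len show False by simp
  qed
  define t' where "t' = (LEAST j. P j)"
  have Pt: "P t'" unfolding t'_def using ex by (metis LeastI)
  have tlt: "t' < Tp" using ex unfolding t'_def by (meson Least_le le_less_trans)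
  have before: "\<forall>j. tp \<le> j \<and> j < t' \<longrightarrow> L (hd_of (R j)) = L (hd_of (R (Suc j)))"
    using not_less_Least[of _ P] unfolding t'_def P_def by blast
  have "tp \<le> t'" using Pt P_def by auto
  from no_cross[OF R this L0 before] Pt tlt \<open>tp \<le> t'\<close> show ?thesis
    unfolding P_def by (intro exI[of _ t']) auto
qed

definition Match :: "(int \<Rightarrow> bool) \<Rightarrow> (nat \<Rightarrow> config) \<Rightarrow> nat \<Rightarrow> (nat \<Rightarrow> config) \<Rightarrow> nat \<Rightarrow> config \<Rightarrow> bool" where
  "Match L Ra ta Rp tp c \<longleftrightarrow> L (hd_of (Ra ta)) \<and> L (hd_of (Rp tp)) \<and> fst c = fst (Ra ta) \<and>
     hd_of c = hd_of (Ra ta) \<and> (\<forall>i. L i \<longrightarrow> tape_of c i = tape_of (Ra ta) i) \<and>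
     (\<forall>i. \<not> L i \<longrightarrow> tape_of c i = tape_of (Rp tp) i)"

lemma prefix_eq_last:
  assumes "xs @ [a] @ zs = ys @ [b] @ zs'" "length xs = length ys"
  shows "a = b"
  using assms by (auto simp: append_eq_append_conv)

lemma phase:
  assumes Ra: "isrun M Ra" and Rp: "isrun M Rp"
    and M: "Match L Ra ta Rp tp c"
    and sync: "cs L Ra ta = cs L Rp tp" and fin: "cs L Ra Ta = cs L Rp Tp"
    and "ta \<le> Ta" "tp \<le> Tp" and haltA: "fst (Ra Ta) \<in> {acc M, rej M}"
    and nh: "fst c \<notin> {acc M, rej M}"
    and Lh: "\<forall>h h' g g'. L h \<longrightarrow> \<not> L h' \<longrightarrow> \<bar>h' - h\<bar> \<le> 1 \<longrightarrow> L g \<longrightarrow> \<not> L g' \<longrightarrow> \<bar>g' - g\<bar> \<le> 1 \<longrightarrow> h' = g'"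
  shows "\<exists>ta' tp'. ta' \<le> Ta \<and> tp' \<le> Tp \<and> ta + tp < ta' + tp' \<and> cs L Ra ta' = cs L Rp tp' \<and>
     (Match L Ra ta' Rp tp' (tm_step M c) \<or> Match (\<lambda>h. \<not> L h) Rp tp' Ra ta' (tm_step M c))"
proof -
  have ta_lt: "ta < Ta"
  proof (rule ccontr)
    assume "\<not> ta < Ta" then have "ta = Ta" using \<open>ta \<le> Ta\<close> by simp
    then show False using M nh haltA unfolding Match_def by simp
  qed
  have sa: "Ra (Suc ta) = tm_step M (Ra ta)" using Ra by (simp add: isrun_def)
  have Lc: "L (hd_of c)" "L (hd_of (Ra ta))" "L (hd_of (Rp tp))" using M unfolding Match_def by auto
  have loc: "fst (tm_step M c) = fst (Ra (Suc ta)) \<and> hd_of (tm_step M c) = hd_of (Ra (Suc ta)) \<and>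
     (\<forall>i. tape_of c i = tape_of (Ra ta) i \<longrightarrow> tape_of (tm_step M c) i = tape_of (Ra (Suc ta)) i)"
    unfolding sa by (rule step_local) (use M Lc in \<open>auto simp: Match_def\<close>)
  have tL: "\<forall>i. L i \<longrightarrow> tape_of (tm_step M c) i = tape_of (Ra (Suc ta)) i"
    using loc M unfolding Match_def by auto
  have frc: "\<forall>i. i \<noteq> hd_of c \<longrightarrow> tape_of (tm_step M c) i = tape_of c i" using step_frame by blast
  have tnL: "\<forall>i. \<not> L i \<longrightarrow> tape_of (tm_step M c) i = tape_of (Rp tp) i"
  proof (intro allI impI)
    fix i assume "\<not> L i"
    then have "i \<noteq> hd_of c" using Lc by auto
    then show "tape_of (tm_step M c) i = tape_of (Rp tp) i" using frc M \<open>\<not> L i\<close> unfolding Match_def by simp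
  qed
  show ?thesis
  proof (cases "L (hd_of (Ra (Suc ta)))")
    case True
    have "cs L Ra (Suc ta) = cs L Rp tp" using sync True Lc by (simp add: cs_Suc)
    moreover have "Match L Ra (Suc ta) Rp tp (tm_step M c)"
      unfolding Match_def using True Lc loc tL tnL by auto
    ultimately show ?thesis using ta_lt \<open>tp \<le> Tp\<close> by (intro exI[of _ "Suc ta"] exI[of _ tp]) auto
  next
    case False
    have csa: "cs L Ra (Suc ta) = cs L Ra ta @ [fst (Ra (Suc ta))]" using False Lc by (simp add: cs_Suc)
    obtain zs where zs: "cs L Ra Ta = cs L Ra (Suc ta) @ zs" using cs_prefix ta_lt by (metis Suc_leI)
    have "length (cs L Rp Tp) = length (cs L Rp tp) + 1 + length zs"
      using zs csa sync fin[symmetric] by simp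
    then have len: "length (cs L Rp tp) < length (cs L Rp Tp)" by simp
    obtain t' where t': "tp \<le> t'" "t' < Tp" "L (hd_of (Rp t'))" "\<not> L (hd_of (Rp (Suc t')))"
      "\<forall>i. \<not> L i \<longrightarrow> tape_of (Rp t') i = tape_of (Rp tp) i" "cs L Rp t' = cs L Rp tp"
      using find_cross[OF Rp \<open>tp \<le> Tp\<close> Lc(3) len] by blast
    have csp: "cs L Rp (Suc t') = cs L Rp tp @ [fst (Rp (Suc t'))]" using t' by (simp add: cs_Suc)
    obtain zs' where zs': "cs L Rp Tp = cs L Rp (Suc t') @ zs'" using cs_prefix t'(2) by (metis Suc_leI)
    have st_eq: "fst (Ra (Suc ta)) = fst (Rp (Suc t'))"
    proof -
      have "cs L Rp tp @ [fst (Ra (Suc ta))] @ zs = cs L Rp tp @ [fst (Rp (Suc t'))] @ zs'"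
        using zs zs' csa csp sync fin by simp
      then show ?thesis by simp
    qed
    have sp: "Rp (Suc t') = tm_step M (Rp t')" using Rp by (simp add: isrun_def)
    have hd_eq: "hd_of (Ra (Suc ta)) = hd_of (Rp (Suc t'))"
    proof (rule Lh[rule_format, of "hd_of (Ra ta)" _ "hd_of (Rp t')"])
      show "\<bar>hd_of (Ra (Suc ta)) - hd_of (Ra ta)\<bar> \<le> 1" unfolding sa using step_frame by blast
      show "\<bar>hd_of (Rp (Suc t')) - hd_of (Rp t')\<bar> \<le> 1" unfolding sp using step_frame by blast
    qed (use Lc False t' in auto)
    have frp: "\<forall>i. \<not> L i \<longrightarrow> tape_of (Rp (Suc t')) i = tape_of (Rp t') i"
    proof (intro allI impI)
      fix i assume "\<not> L i"
      then have "i \<noteq> hd_of (Rp t')" using t'(3) by auto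
      then show "tape_of (Rp (Suc t')) i = tape_of (Rp t') i" unfolding sp using step_frame by blast
    qed
    have "Match (\<lambda>h. \<not> L h) Rp (Suc t') Ra (Suc ta) (tm_step M c)"
      unfolding Match_def
    proof (intro conjI)
      show "fst (tm_step M c) = fst (Rp (Suc t'))" using loc st_eq by simp
      show "hd_of (tm_step M c) = hd_of (Rp (Suc t'))" using loc hd_eq by simp
    qed (use t' False tL tnL frp in auto)
    moreover have "cs L Ra (Suc ta) = cs L Rp (Suc t')" using csa csp sync st_eq by simp
    ultimately show ?thesis using ta_lt t' by (intro exI[of _ "Suc ta"] exI[of _ "Suc t'"]) auto
  qed
qed

lemma cut_paste:
  fixes b :: int
  assumes R1: "isrun M R1" and R2: "isrun M R2" and R3: "isrun M R3"
    and i1: "fst (R3 0) = fst (R1 0)" "fst (R2 0) = fst (R1 0)"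
    and i2: "hd_of (R1 0) = 0" "hd_of (R2 0) = 0" "hd_of (R3 0) = 0" and "0 < b"
    and i3: "\<forall>i. i < b \<longrightarrow> tape_of (R3 0) i = tape_of (R1 0) i"
        "\<forall>i. \<not> i < b \<longrightarrow> tape_of (R3 0) i = tape_of (R2 0) i"
    and a1: "fst (R1 T1) = acc M" and a2: "fst (R2 T2) = acc M"
    and csq: "cs (\<lambda>h. h < b) R1 T1 = cs (\<lambda>h. h < b) R2 T2"
  shows "\<exists>k. fst (R3 k) = acc M"
proof -
  define L where "L = (\<lambda>h::int. h < b)"
  define H where "H = {acc M, rej M}"
  define Inv where "Inv s \<longleftrightarrow> (\<exists>t1 t2. t1 \<le> T1 \<and> t2 \<le> T2 \<and> cs L R1 t1 = cs L R2 t2 \<and>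
      (s \<le> t1 + t2 \<or> fst (R3 s) \<in> H) \<and>
      (Match L R1 t1 R2 t2 (R3 s) \<or> Match (\<lambda>h. \<not> L h) R2 t2 R1 t1 (R3 s)))" for s
  have LhA: "\<forall>h h' g g'. L h \<longrightarrow> \<not> L h' \<longrightarrow> \<bar>h' - h\<bar> \<le> 1 \<longrightarrow> L g \<longrightarrow> \<not> L g' \<longrightarrow> \<bar>g' - g\<bar> \<le> 1 \<longrightarrow> h' = g'"
    unfolding L_def by arith
  have LhB: "\<forall>h h' g g'. \<not> L h \<longrightarrow> \<not> \<not> L h' \<longrightarrow> \<bar>h' - h\<bar> \<le> 1 \<longrightarrow> \<not> L g \<longrightarrow> \<not> \<not> L g' \<longrightarrow> \<bar>g' - g\<bar> \<le> 1 \<longrightarrow> h' = g'"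
    unfolding L_def by arith
  have h1: "fst (R1 T1) \<in> H" and h2: "fst (R2 T2) \<in> H" using a1 a2 H_def by auto
  have csqL: "cs L R1 T1 = cs L R2 T2" using csq L_def by simp
  have Inv0: "Inv 0"
    unfolding Inv_def Match_def using i1 i2 i3 \<open>0 < b\<close> L_def
    by (intro exI[of _ 0]) auto
  have InvS: "Inv (Suc s)" if "Inv s" for s
  proof -
    obtain t1 t2 where t: "t1 \<le> T1" "t2 \<le> T2" "cs L R1 t1 = cs L R2 t2"
      "s \<le> t1 + t2 \<or> fst (R3 s) \<in> H"
      "Match L R1 t1 R2 t2 (R3 s) \<or> Match (\<lambda>h. \<not> L h) R2 t2 R1 t1 (R3 s)"
      using \<open>Inv s\<close> unfolding Inv_def by blast
    have s3: "R3 (Suc s) = tm_step M (R3 s)" using R3 by (simp add: isrun_def)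
    show ?thesis
    proof (cases "fst (R3 s) \<in> H")
      case True
      then have "R3 (Suc s) = R3 s" using s3 step_halted H_def by metis
      then show ?thesis using t True unfolding Inv_def by (intro exI[of _ t1] exI[of _ t2]) auto
    next
      case False
      then have st: "s \<le> t1 + t2" using t by auto
      from t(5) show ?thesis
      proof
        assume m: "Match L R1 t1 R2 t2 (R3 s)"
        obtain ta' tp' where r: "ta' \<le> T1" "tp' \<le> T2" "t1 + t2 < ta' + tp'" "cs L R1 ta' = cs L R2 tp'"
          "Match L R1 ta' R2 tp' (tm_step M (R3 s)) \<or> Match (\<lambda>h. \<not> L h) R2 tp' R1 ta' (tm_step M (R3 s))"
          using phase[OF R1 R2 m t(3) csqL t(1,2) h1[unfolded H_def] False[unfolded H_def] LhA] by blast
        then show ?thesis unfolding Inv_def s3 using st by (intro exI[of _ ta'] exI[of _ tp']) auto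
      next
        assume m: "Match (\<lambda>h. \<not> L h) R2 t2 R1 t1 (R3 s)"
        have c1: "cs (\<lambda>h. \<not> L h) R2 t2 = cs (\<lambda>h. \<not> L h) R1 t1" using t(3) by (simp add: cs_neg)
        have c2: "cs (\<lambda>h. \<not> L h) R2 T2 = cs (\<lambda>h. \<not> L h) R1 T1" using csqL by (simp add: cs_neg)
        obtain ta' tp' where r: "ta' \<le> T2" "tp' \<le> T1" "t2 + t1 < ta' + tp'"
          "cs (\<lambda>h. \<not> L h) R2 ta' = cs (\<lambda>h. \<not> L h) R1 tp'"
          "Match (\<lambda>h. \<not> L h) R2 ta' R1 tp' (tm_step M (R3 s)) \<or> Match (\<lambda>h. \<not> \<not> L h) R1 tp' R2 ta' (tm_step M (R3 s))"
          using phase[OF R2 R1 m c1 c2 t(2,1) h2[unfolded H_def] False[unfolded H_def] LhB] by blast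
        have "cs L R1 tp' = cs L R2 ta'" using r(4) by (simp add: cs_neg)
        then show ?thesis unfolding Inv_def s3 using st r by (intro exI[of _ tp'] exI[of _ ta']) auto
      qed
    qed
  qed
  have "Inv s" for s by (induction s) (use Inv0 InvS in auto)
  then obtain t1 t2 where t: "t1 \<le> T1" "t2 \<le> T2"
      "Suc (T1 + T2) \<le> t1 + t2 \<or> fst (R3 (Suc (T1 + T2))) \<in> H"
      "Match L R1 t1 R2 t2 (R3 (Suc (T1 + T2))) \<or> Match (\<lambda>h. \<not> L h) R2 t2 R1 t1 (R3 (Suc (T1 + T2)))"
    unfolding Inv_def by blast
  have hh: "fst (R3 (Suc (T1 + T2))) \<in> H" using t by auto
  from t(4) show ?thesis
  proof
    assume "Match L R1 t1 R2 t2 (R3 (Suc (T1 + T2)))"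
    then have e: "fst (R3 (Suc (T1 + T2))) = fst (R1 t1)" by (simp add: Match_def)
    then have "R1 T1 = R1 t1" using run_absorb'[OF R1 _ t(1)] hh H_def by simp
    then show ?thesis using e a1 by metis
  next
    assume "Match (\<lambda>h. \<not> L h) R2 t2 R1 t1 (R3 (Suc (T1 + T2)))"
    then have e: "fst (R3 (Suc (T1 + T2))) = fst (R2 t2)" by (simp add: Match_def)
    then have "R2 T2 = R2 t2" using run_absorb'[OF R2 _ t(2)] hh H_def by simp
    then show ?thesis using e a2 by metis
  qed
qed

lemma cs_length_Suc: "length (cs L R (Suc t)) = length (cs L R t) +
   (if L (hd_of (R t)) \<noteq> L (hd_of (R (Suc t))) then 1 else 0)"
  by (simp add: cs_Suc)

lemma cs_sum_le:
  assumes R: "isrun M R" and B: "finite B"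
  shows "(\<Sum>b\<in>B. length (cs (\<lambda>h. h < b) R t)) \<le> t"
proof (induction t)
  case 0 then show ?case by simp
next
  case (Suc t)
  define h where "h = hd_of (R t)"
  define h' where "h' = hd_of (R (Suc t))"
  have d: "\<bar>h' - h\<bar> \<le> 1" unfolding h_def h'_def using R step_frame by (metis isrun_def)
  have le: "(if (h < b) \<noteq> (h' < b) then 1 else 0) \<le> (if b = max h h' then 1 else (0::nat))" for b
    using d by auto
  have "(\<Sum>b\<in>B. length (cs (\<lambda>h. h < b) R (Suc t))) =
        (\<Sum>b\<in>B. length (cs (\<lambda>h. h < b) R t)) + (\<Sum>b\<in>B. if (h < b) \<noteq> (h' < b) then 1 else 0)"
    unfolding cs_length_Suc h_def h'_def by (simp add: sum.distrib)
  also have "(\<Sum>b\<in>B. if (h < b) \<noteq> (h' < b) then 1 else 0) \<le> (\<Sum>b\<in>B. if b = max h h' then 1 else (0::nat))"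
    by (rule sum_mono) (use le in auto)
  also have "\<dots> \<le> 1" using B by (simp add: sum.delta)
  finally show ?case using Suc by simp
qed

lemma tm_run_Suc: "tm_run M w (Suc t) = tm_step M (tm_run M w t)"
  by (simp add: tm_run_def)

lemma isrun_tm_run: "isrun M (tm_run M w)"
  by (simp add: isrun_def tm_run_Suc)

lemma reach:
  assumes wf: "wf_tm S M" and w: "w \<in> lists S"
  shows "fst (tm_run M w t) \<in> states M \<and> (\<forall>i. tape_of (tm_run M w t) i \<in> tape_alph M)"
proof (induction t)
  case 0
  have "\<forall>i. (if 0 \<le> i \<and> i < int (length w) then enc M (w ! nat i) else blank M) \<in> tape_alph M"
  proof
    fix i show "(if 0 \<le> i \<and> i < int (length w) then enc M (w ! nat i) else blank M) \<in> tape_alph M"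
    proof (cases "0 \<le> i \<and> i < int (length w)")
      case True
      then have "w ! nat i \<in> S" using w by (simp add: in_lists_conv_set nat_less_iff)
      then show ?thesis using True wf unfolding wf_tm_def by auto
    qed (use wf in \<open>auto simp: wf_tm_def\<close>)
  qed
  then show ?case using wf by (simp add: tm_run_def tm_init_def wf_tm_def)
next
  case (Suc t)
  obtain q tp h where c: "tm_run M w t = (q, tp, h)" by (metis prod_cases3)
  have q: "q \<in> states M" and tp: "\<forall>i. tp i \<in> tape_alph M" using Suc c by auto
  show ?case
  proof (cases "q = acc M \<or> q = rej M")
    case True then show ?thesis using Suc c by (simp add: tm_run_Suc)
  next
    case False
    obtain q' s d where dl: "delta M q (tp h) = (q', s, d)" by (metis prod_cases3)
    have "q' \<in> states M" "s \<in> tape_alph M" using wf q tp dl unfolding wf_tm_def by (metis fst_conv snd_conv)+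
    then show ?thesis using False c dl tp by (simp add: tm_run_Suc)
  qed
qed

lemma geom_le: "(1::nat) \<le> q \<Longrightarrow> (\<Sum>k<L. q ^ k) \<le> (q + 1) ^ L"
proof (induction L)
  case 0 then show ?case by simp
next
  case (Suc L)
  have "q ^ L \<le> (q+1)^L" by (simp add: power_mono)
  also have "\<dots> \<le> q * (q+1)^L" using Suc.prems by simp
  finally show ?case using Suc by simp
qed

lemma card_short_lists:
  assumes "finite Q" "1 \<le> card Q"
  shows "card {xs. set xs \<subseteq> Q \<and> length xs < L} \<le> (card Q + 1) ^ L"
proof -
  have eq: "{xs. set xs \<subseteq> Q \<and> length xs < L} = (\<Union>k<L. {xs. set xs \<subseteq> Q \<and> length xs = k})" by auto
  have "card (\<Union>k<L. {xs. set xs \<subseteq> Q \<and> length xs = k}) \<le> (\<Sum>k<L. card {xs. set xs \<subseteq> Q \<and> length xs = k})"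
    by (rule card_UN_le) simp
  also have "\<dots> = (\<Sum>k<L. card Q ^ k)" using assms by (simp add: card_lists_length_eq)
  also have "\<dots> \<le> (card Q + 1) ^ L" using geom_le assms by blast
  finally show ?thesis unfolding eq .
qed

lemma counting:
  assumes A: "finite A" and inj: "inj_on f A" and sub: "\<forall>g\<in>A. set (f g) \<subseteq> Q"
    and Q: "finite Q" "1 \<le> card Q"
  shows "L * card A \<le> (\<Sum>g\<in>A. length (f g)) + L * (card Q + 1) ^ L"
proof -
  define A1 where "A1 = {g\<in>A. length (f g) < L}"
  define A2 where "A2 = {g\<in>A. \<not> length (f g) < L}"
  have cA: "card A = card A1 + card A2"
  proof -
    have "A = A1 \<union> A2" unfolding A1_def A2_def by auto
    moreover have "A1 \<inter> A2 = {}" unfolding A1_def A2_def by auto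
    moreover have "finite A1" "finite A2" using A unfolding A1_def A2_def by auto
    ultimately show ?thesis by (simp add: card_Un_disjoint)
  qed
  have "card A1 = card (f ` A1)" proof -
    have "inj_on f A1" using inj by (rule inj_on_subset) (auto simp: A1_def)
    then show ?thesis by (simp add: card_image)
  qed
  also have "\<dots> \<le> card {xs. set xs \<subseteq> Q \<and> length xs < L}"
    by (rule card_mono) (use sub A1_def Q in \<open>auto intro!: finite_subset[OF _ finite_lists_length_le[of Q L]]\<close>)
  also have "\<dots> \<le> (card Q + 1) ^ L" by (rule card_short_lists[OF Q])
  finally have c1: "card A1 \<le> (card Q + 1) ^ L" .
  have "L * card A2 = (\<Sum>g\<in>A2. L)" by simp
  also have "\<dots> \<le> (\<Sum>g\<in>A2. length (f g))" by (rule sum_mono) (simp add: A2_def)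
  also have "\<dots> \<le> (\<Sum>g\<in>A. length (f g))" by (rule sum_mono2) (use A A2_def in auto)
  finally have c2: "L * card A2 \<le> (\<Sum>g\<in>A. length (f g))" .
  have c3: "L * card A1 \<le> L * (card Q + 1) ^ L" using c1 by (rule mult_le_mono2)
  have "L * card A = L * card A1 + L * card A2" using cA by (simp add: algebra_simps)
  then show ?thesis using c2 c3 by linarith
qed

lemma eval_Nil[simp]: "word_eval G [] = \<one>\<^bsub>G\<^esub>" by (simp add: word_eval_def)
lemma eval_Cons[simp]: "word_eval G (x # w) = x \<otimes>\<^bsub>G\<^esub> word_eval G w" by (simp add: word_eval_def)

context group begin

lemma eval_closed: "set w \<subseteq> carrier G \<Longrightarrow> word_eval G w \<in> carrier G"
  by (induction w) auto

lemma eval_append: "set x \<subseteq> carrier G \<Longrightarrow> set y \<subseteq> carrier G \<Longrightarrow>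
   word_eval G (x @ y) = word_eval G x \<otimes> word_eval G y"
  by (induction x) (auto simp: eval_closed m_assoc)

lemma eval_invword: "set x \<subseteq> carrier G \<Longrightarrow> word_eval G (x @ rev (map (m_inv G) x)) = \<one>"
proof (induction x)
  case Nil then show ?case by simp
next
  case (Cons a x)
  have a: "a \<in> carrier G" and x: "set x \<subseteq> carrier G" using Cons by auto
  have sx: "set (x @ rev (map (m_inv G) x)) \<subseteq> carrier G" using x by auto
  have "word_eval G ((a # x) @ rev (map (m_inv G) (a # x))) = a \<otimes> word_eval G ((x @ rev (map (m_inv G) x)) @ [inv a])"
    by simp
  also have "\<dots> = a \<otimes> (word_eval G (x @ rev (map (m_inv G) x)) \<otimes> word_eval G [inv a])"
    using eval_append[OF sx] a by simp
  also have "\<dots> = \<one>" using Cons.IH[OF x] a by simp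
  finally show ?case .
qed

lemma gen_word:
  assumes "S \<subseteq> carrier G" "\<forall>s\<in>S. inv s \<in> S" "g \<in> generate G S"
  shows "\<exists>w\<in>lists S. word_eval G w = g"
  using assms(3)
proof (induction g rule: generate.induct)
  case one then show ?case by (intro bexI[of _ "[]"]) auto
next
  case (incl h) then show ?case using assms by (intro bexI[of _ "[h]"]) auto
next
  case (inv h) then show ?case using assms by (intro bexI[of _ "[inv h]"]) auto
next
  case (eng h1 h2)
  then obtain w1 w2 where "w1 \<in> lists S" "w2 \<in> lists S" "word_eval G w1 = h1" "word_eval G w2 = h2" by blast
  then show ?case using assms(1) eval_append[of w1 w2]
    by (intro bexI[of _ "w1 @ w2"]) (auto simp: in_lists_conv_set)
qed

end

lemma eval_pad': "group G \<Longrightarrow> s \<in> carrier G \<Longrightarrow> set w \<subseteq> carrier G \<Longrightarrow> word_eval G (concat (replicate j [s, inv\<^bsub>G\<^esub> s]) @ w) = word_eval G w"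
  by (induction j) (auto simp: group.eval_closed group.r_inv monoid.m_assoc[symmetric] group.is_monoid group.inv_closed)

definition Ew :: "('a, 'b) monoid_scheme \<Rightarrow> 'a set \<Rightarrow> nat \<Rightarrow> 'a set" where
  "Ew G S k = word_eval G ` {w. set w \<subseteq> S \<and> length w = k}"

lemma Ew_finite: "finite S \<Longrightarrow> finite (Ew G S k)"
  unfolding Ew_def by (simp add: finite_lists_length_eq)

lemma len_pad: "length (concat (replicate j [a, b])) = 2 * j"
  by (induction j) auto

lemma growth_split:
  assumes G: "group G" and fs: "finite_symmetric_generating_set G S" and s0: "s0 \<in> S"
  shows "growth G S n \<le> card (Ew G S n) + card (Ew G S (Suc n))"
proof -
  have S: "finite S" "S \<subseteq> carrier G" "\<forall>s\<in>S. inv\<^bsub>G\<^esub> s \<in> S" "generate G S = carrier G"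
    using fs unfolding finite_symmetric_generating_set_def by auto
  have sub: "{g \<in> carrier G. word_length G S g \<le> n} \<subseteq> Ew G S n \<union> Ew G S (Suc n)"
  proof
    fix g assume "g \<in> {g \<in> carrier G. word_length G S g \<le> n}"
    then have g: "g \<in> carrier G" "word_length G S g \<le> n" by auto
    obtain w where "w \<in> lists S" "word_eval G w = g"
      using group.gen_word[OF G S(2,3)] g S(4) by blast
    then have "\<exists>k. \<exists>w\<in>lists S. length w = k \<and> word_eval G w = g" by blast
    from LeastI_ex[OF this] obtain w' where w': "w' \<in> lists S" "length w' = word_length G S g" "word_eval G w' = g"
      unfolding word_length_def by blast
    have sw': "set w' \<subseteq> carrier G" using w'(1) S(2) by auto
    have s0c: "s0 \<in> carrier G" "inv\<^bsub>G\<^esub> s0 \<in> S" using s0 S by auto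
    define l where "l = word_length G S g"
    define k where "k = (if even (n - l) then n else Suc n)"
    define j where "j = (k - l) div 2"
    define w'' where "w'' = concat (replicate j [s0, inv\<^bsub>G\<^esub> s0]) @ w'"
    have "even (k - l)" unfolding k_def using g(2) l_def by auto
    moreover have "l \<le> k" unfolding k_def using g(2) l_def by auto
    moreover have "length w'' = 2 * j + l" unfolding w''_def using w'(2) l_def by (simp add: len_pad)
    ultimately have lw: "length w'' = k" unfolding j_def by simp
    have "set w'' \<subseteq> S" unfolding w''_def using w'(1) s0 s0c by (auto simp: in_lists_conv_set)
    moreover have "word_eval G w'' = g" unfolding w''_def using eval_pad'[OF G s0c(1) sw'] w'(3) by simp
    ultimately have "g \<in> Ew G S k" unfolding Ew_def using lw by blast
    then show "g \<in> Ew G S n \<union> Ew G S (Suc n)" unfolding k_def by (auto split: if_splits)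
  qed
  have "growth G S n \<le> card (Ew G S n \<union> Ew G S (Suc n))"
    unfolding growth_def by (rule card_mono) (use sub Ew_finite S(1) in auto)
  also have "\<dots> \<le> card (Ew G S n) + card (Ew G S (Suc n))" by (rule card_Un_le)
  finally show ?thesis .
qed

lemma S_nonempty:
  assumes G: "group G" and fs: "finite_symmetric_generating_set G S" and eg: "exponential_growth G S"
  shows "S \<noteq> {}"
proof
  assume "S = {}"
  have S: "S \<subseteq> carrier G" "\<forall>s\<in>S. inv\<^bsub>G\<^esub> s \<in> S" "generate G S = carrier G"
    using fs unfolding finite_symmetric_generating_set_def by auto
  have "carrier G \<subseteq> {\<one>\<^bsub>G\<^esub>}"
  proof
    fix g assume "g \<in> carrier G"
    then obtain w where "w \<in> lists S" "word_eval G w = g" using group.gen_word[OF G S(1,2)] S(3) by blast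
    then show "g \<in> {\<one>\<^bsub>G\<^esub>}" using \<open>S = {}\<close> by auto
  qed
  then have "growth G S 1 \<le> 1" unfolding growth_def
  proof -
    have "card {g \<in> carrier G. word_length G S g \<le> 1} \<le> card {\<one>\<^bsub>G\<^esub>}"
      by (rule card_mono) (use \<open>carrier G \<subseteq> {\<one>\<^bsub>G\<^esub>}\<close> in auto)
    then show "card {g \<in> carrier G. word_length G S g \<le> 1} \<le> 1" by simp
  qed
  moreover obtain a :: real where "a > 1" "\<forall>n. real (growth G S n) \<ge> a ^ n"
    using eg unfolding exponential_growth_def by blast
  ultimately have "a \<le> 1"
    by (metis (no_types, opaque_lifting) of_nat_1 of_nat_le_iff order.trans power_one_right)
  then show False using \<open>a > 1\<close> by simp
qed

lemma acc_at:
  assumes d: "decides_in_time S M Lg T" and w: "w \<in> lists S" "w \<in> Lg"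
  shows "fst (tm_run M w (T (length w))) = acc M"
proof -
  have wf: "wf_tm S M" using d by (simp add: decides_in_time_def)
  have h: "fst (tm_run M w (T (length w))) \<in> {acc M, rej M}" and a: "accepts M w"
    using d w unfolding decides_in_time_def halts_within_def by auto
  obtain k where k: "fst (tm_run M w k) = acc M" using a unfolding accepts_def by blast
  have R: "isrun M (tm_run M w)" by (rule isrun_tm_run)
  show ?thesis
  proof (cases "k \<le> T (length w)")
    case True
    have "fst (tm_run M w k) \<in> {acc M, rej M}" using k by simp
    from run_absorb'[OF R this True] show ?thesis using k by simp
  next
    case False
    then have "T (length w) \<le> k" by simp
    from run_absorb'[OF R h this] show ?thesis using k by simp
  qed
qed

lemma cp_words:
  assumes "0 < b" "b \<le> length w1" "b \<le> length w2"
    and a1: "fst (tm_run M w1 T1) = acc M" and a2: "fst (tm_run M w2 T2) = acc M"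
    and c: "cs (\<lambda>h. h < int b) (tm_run M w1) T1 = cs (\<lambda>h. h < int b) (tm_run M w2) T2"
  shows "accepts M (take b w1 @ drop b w2)"
proof -
  define w3 where "w3 = take b w1 @ drop b w2"
  have l3: "length w3 = length w2" unfolding w3_def using assms(1-3) by simp
  have t1: "tape_of (tm_run M w3 0) i = tape_of (tm_run M w1 0) i" if "i < int b" for i
  proof (cases "0 \<le> i")
    case True
    then have "nat i < b" using that by simp
    then have "w3 ! nat i = w1 ! nat i" unfolding w3_def using assms(1-3) by (simp add: nth_append)
    then show ?thesis using True that assms(1-3) l3 by (simp add: tm_run_def tm_init_def)
  qed (simp add: tm_run_def tm_init_def)
  have t2: "tape_of (tm_run M w3 0) i = tape_of (tm_run M w2 0) i" if "\<not> i < int b" for i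
  proof -
    have "0 \<le> i" "b \<le> nat i" using that assms(1-3) by auto
    then have "w3 ! nat i = w2 ! nat i" if "nat i < length w2" unfolding w3_def using assms(1-3) that
      by (simp add: nth_append)
    then show ?thesis using l3 \<open>0 \<le> i\<close> by (auto simp: tm_run_def tm_init_def)
  qed
  have i0: "fst (tm_run M w 0) = start M" "hd_of (tm_run M w 0) = 0" for w
    by (simp_all add: tm_run_def tm_init_def)
  have f1: "fst (tm_run M w3 0) = fst (tm_run M w1 0)" "fst (tm_run M w2 0) = fst (tm_run M w1 0)"
    by (simp_all only: i0)
  have bb: "0 < int b" using assms(1-3) by simp
  have t1': "\<forall>i. i < int b \<longrightarrow> tape_of (tm_run M w3 0) i = tape_of (tm_run M w1 0) i" using t1 by blast
  have t2': "\<forall>i. \<not> i < int b \<longrightarrow> tape_of (tm_run M w3 0) i = tape_of (tm_run M w2 0) i" using t2 by blast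
  have "\<exists>k. fst (tm_run M w3 k) = acc M"
    by (rule cut_paste[OF isrun_tm_run isrun_tm_run isrun_tm_run f1 i0(2) i0(2) i0(2) bb t1' t2' a1 a2 c])
  then show ?thesis unfolding accepts_def w3_def .
qed

lemma cs_set: "set (cs L R t) \<subseteq> range (\<lambda>i. fst (R (Suc i)))"
  by (auto simp: cs_def)

lemma mixed_eval:
  assumes G: "group G" and "set x1 \<subseteq> carrier G" "set x2 \<subseteq> carrier G" "set y \<subseteq> carrier G"
    and "word_eval G (x2 @ y) = \<one>\<^bsub>G\<^esub>" "word_eval G (x1 @ y) = \<one>\<^bsub>G\<^esub>"
  shows "word_eval G x1 = word_eval G x2"
proof -
  have c: "word_eval G x1 \<in> carrier G" "word_eval G x2 \<in> carrier G" "word_eval G y \<in> carrier G"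
    using group.eval_closed[OF G] assms by auto
  have "inv\<^bsub>G\<^esub> (word_eval G y) = word_eval G x1"
    using group.inv_equality[OF G _ c(3) c(1)] group.eval_append[OF G assms(2,4)] assms(6) by simp
  moreover have "inv\<^bsub>G\<^esub> (word_eval G y) = word_eval G x2"
    using group.inv_equality[OF G _ c(3) c(2)] group.eval_append[OF G assms(3,4)] assms(5) by simp
  ultimately show ?thesis by simp
qed

lemma pow_bound:
  fixes a r :: real
  assumes "1 \<le> r" "4 * r < a ^ m" "1 < a" "m \<le> n" "0 < m"
  shows "4 * r ^ (n div m - 1) \<le> a ^ n"
proof -
  define L where "L = n div m - 1"
  have "m * L + m \<le> n"
  proof -
    have "0 < n div m" using assms by (simp add: div_greater_zero_iff)
    then have "1 \<le> n div m" by simp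
    then have "m * L + m = m * (n div m)" unfolding L_def by (simp add: algebra_simps)
    also have "\<dots> \<le> n" by simp
    finally show ?thesis .
  qed
  have "r ^ L \<le> (a ^ m) ^ L" by (rule power_mono) (use assms in auto)
  then have "4 * r ^ L \<le> 4 * a ^ (m * L)" by (simp add: power_mult)
  also have "\<dots> \<le> a ^ m * a ^ (m * L)"
  proof -
    have "4 \<le> a ^ m" using assms by linarith
    then show ?thesis using assms by (intro mult_right_mono) auto
  qed
  also have "\<dots> = a ^ (m * L + m)" by (simp add: power_add)
  also have "\<dots> \<le> a ^ n" by (rule power_increasing) (use \<open>m * L + m \<le> n\<close> assms in auto)
  finally show ?thesis unfolding L_def .
qed

lemma final_arith:
  fixes Tl :: real
  assumes "0 < m" "4 * m < n" "real (n * (n div m - 1)) \<le> 2 * Tl" "Tl \<le> (1 / (144 * real m)) * real l ^ 2"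
    "l \<le> 6 * n"
  shows False
proof -
  have "real m * real (n div m) \<ge> real n - real m"
  proof -
    have "n = m * (n div m) + n mod m" by simp
    moreover have "n mod m < m" using assms by simp
    ultimately have "n \<le> m * (n div m) + m" by linarith
    then have "real n \<le> real m * real (n div m) + real m" by (metis of_nat_add of_nat_le_iff of_nat_mult)
    then show ?thesis by linarith
  qed
  have L: "real (n div m - 1) \<ge> real (n div m) - 1" by linarith
  have ln: "real l ^ 2 \<le> 36 * real n ^ 2"
  proof -
    have "real l \<le> 6 * real n" using assms by linarith
    then have "real l ^ 2 \<le> (6 * real n) ^ 2" by (rule power_mono) simp
    then show ?thesis by (simp add: power_mult_distrib)
  qed
  have mpos: "real m > 0" using assms by simp
  have "real n * real (n div m - 1) \<le> 2 * Tl" using assms(3) by simp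
  also have "\<dots> \<le> 2 * ((1 / (144 * real m)) * (36 * real n ^ 2))"
  proof -
    have "(1 / (144 * real m)) * real l ^ 2 \<le> (1 / (144 * real m)) * (36 * real n ^ 2)"
      by (rule mult_left_mono) (use ln mpos in auto)
    then show ?thesis using assms(4) by linarith
  qed
  also have "\<dots> = real n ^ 2 / (2 * real m)" using mpos by (simp add: field_simps power2_eq_square)
  finally have A: "real n * real (n div m - 1) \<le> real n ^ 2 / (2 * real m)" .
  have "real m * (real n * real (n div m - 1)) \<le> real n ^ 2 / 2"
    using mult_left_mono[OF A, of "real m"] mpos by (simp add: field_simps)
  moreover have "real m * (real n * real (n div m - 1)) \<ge> real n * (real n - 2 * real m)"
  proof -
    have "real m * real (n div m - 1) \<ge> real n - 2 * real m"
    proof -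
      have "real m * real (n div m - 1) \<ge> real m * (real (n div m) - 1)"
        by (rule mult_left_mono[OF L]) (use mpos in simp)
      then have "real m * real (n div m - 1) \<ge> real m * real (n div m) - real m" by (simp add: algebra_simps)
      then show ?thesis using \<open>real m * real (n div m) \<ge> real n - real m\<close> by linarith
    qed
    then have "real n * (real n - 2 * real m) \<le> real n * (real m * real (n div m - 1))"
      by (rule mult_left_mono) simp
    then show ?thesis by (simp add: algebra_simps)
  qed
  ultimately have "real n * (real n - 2 * real m) \<le> real n ^ 2 / 2" by linarith
  then have "real n * (real n / 2 - 2 * real m) \<le> 0" by (simp add: power2_eq_square algebra_simps)
  moreover have "real n > 0" "real n / 2 - 2 * real m > 0" using assms by auto
  ultimately show False by (simp add: mult_le_0_iff)
qed

theorem mainTheorem4: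
  fixes G :: "('a, 'b) monoid_scheme" and S :: "'a set"
  assumes "group G"
    and "finite_symmetric_generating_set G S"
    and "exponential_growth G S"
  shows "\<not> DTIME1_o_n2 S (word_problem G S)"
proof
  assume "DTIME1_o_n2 S (word_problem G S)"
  then obtain M :: "'a tm" and T where oT: "(\<lambda>n. real (T n)) \<in> o(\<lambda>n. real n ^ 2)"
    and d: "decides_in_time S M (word_problem G S) T"
    unfolding DTIME1_o_n2_def by blast
  have G: "group G" by fact
  have wf: "wf_tm S M" using d by (simp add: decides_in_time_def)
  have S: "finite S" "S \<subseteq> carrier G" "\<forall>s\<in>S. inv\<^bsub>G\<^esub> s \<in> S"
    using assms(2) unfolding finite_symmetric_generating_set_def by auto
  obtain s0 where s0: "s0 \<in> S" using S_nonempty[OF assms] by blast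
  define Q where "Q = states M"
  have fQ: "finite Q" using wf by (simp add: wf_tm_def Q_def)
  have cQ: "1 \<le> card Q"
  proof -
    have "start M \<in> Q" using wf by (simp add: wf_tm_def Q_def)
    then have "card Q \<noteq> 0" using fQ by auto
    then show ?thesis by simp
  qed
  define r where "r = card Q + 1"
  obtain a :: real where a: "a > 1" "\<forall>n. real (growth G S n) \<ge> a ^ n"
    using assms(3) unfolding exponential_growth_def by blast
  obtain m where m: "4 * real r < a ^ m" using real_arch_pow[OF a(1)] by blast
  have m0: "0 < m"
  proof (rule ccontr)
    assume "\<not> 0 < m" then have "m = 0" by simp
    then show False using m r_def by simp
  qed
  define \<epsilon> where "\<epsilon> = 1 / (144 * real m)"
  have "\<epsilon> > 0" unfolding \<epsilon>_def using m0 by simp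
  from landau_o.smallD[OF oT this] obtain n0 where n0: "\<And>x. x \<ge> n0 \<Longrightarrow> real (T x) \<le> \<epsilon> * real x ^ 2"
    unfolding eventually_at_top_linorder by auto
  define n where "n = max n0 (4 * m + 1)"
  have n: "n \<ge> n0" "4 * m < n" "1 \<le> n" unfolding n_def by auto
  have "a ^ n \<le> real (card (Ew G S n)) + real (card (Ew G S (Suc n)))"
  proof -
    have "growth G S n \<le> card (Ew G S n) + card (Ew G S (Suc n))" by (rule growth_split[OF G assms(2) s0])
    then have "real (growth G S n) \<le> real (card (Ew G S n) + card (Ew G S (Suc n)))" by (simp only: of_nat_le_iff)
    then show ?thesis using a(2) by (simp only: of_nat_add) (meson order.trans)
  qed
  then have "\<exists>N. (N = n \<or> N = Suc n) \<and> a ^ n \<le> 2 * real (card (Ew G S N))"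
  proof (cases "card (Ew G S (Suc n)) \<le> card (Ew G S n)")
    case True
    then have "real (card (Ew G S (Suc n))) \<le> real (card (Ew G S n))" by (simp only: of_nat_le_iff)
    then show ?thesis using \<open>a ^ n \<le> _\<close> by (intro exI[of _ n]) linarith
  next
    case False
    then have "real (card (Ew G S n)) \<le> real (card (Ew G S (Suc n)))" by simp
    then show ?thesis using \<open>a ^ n \<le> _\<close> by (intro exI[of _ "Suc n"]) linarith
  qed
  then obtain N where N: "N = n \<or> N = Suc n" "a ^ n \<le> 2 * real (card (Ew G S N))" by blast
  define E where "E = Ew G S N"
  have fE: "finite E" unfolding E_def using Ew_finite S(1) by blast
  define u where "u g = (SOME w. set w \<subseteq> S \<and> length w = N \<and> word_eval G w = g)" for g
  have u: "set (u g) \<subseteq> S \<and> length (u g) = N \<and> word_eval G (u g) = g" if "g \<in> E" for g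
  proof -
    have "\<exists>w. set w \<subseteq> S \<and> length w = N \<and> word_eval G w = g" using that unfolding E_def Ew_def by blast
    then show ?thesis unfolding u_def by (rule someI_ex)
  qed
  define p where "p = replicate n s0"
  define W where "W g = (u g @ p) @ rev (map (m_inv G) (u g @ p))" for g
  define l where "l = 2 * (N + n)"
  have Wl: "W g \<in> lists S" "length (W g) = l" "W g \<in> word_problem G S" if "g \<in> E" for g
  proof -
    have s1: "set (u g @ p) \<subseteq> S" using u[OF that] s0 by (auto simp: p_def)
    have s2: "\<forall>x\<in>set (u g @ p). inv\<^bsub>G\<^esub> x \<in> S" using S(3) s1 by blast
    show "W g \<in> lists S" unfolding W_def using s1 s2 by auto
    show "length (W g) = l" unfolding W_def l_def p_def using u[OF that] by simp
    have "word_eval G (W g) = \<one>\<^bsub>G\<^esub>" unfolding W_def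
      by (rule group.eval_invword[OF G]) (use s1 S(2) in auto)
    then show "W g \<in> word_problem G S" unfolding word_problem_def using \<open>W g \<in> lists S\<close> by simp
  qed
  have accW: "fst (tm_run M (W g) (T l)) = acc M" if "g \<in> E" for g
    using acc_at[OF d Wl(1,3)[OF that]] Wl(2)[OF that] by simp
  define B where "B = (\<lambda>i. int (N + i)) ` {..<n}"
  have fB: "finite B" unfolding B_def by simp
  have cB: "card B = n" unfolding B_def by (subst card_image) (auto simp: inj_on_def)
  define csg where "csg g b = cs (\<lambda>h. h < b) (tm_run M (W g)) (T l)" for g b
  have inj: "inj_on (\<lambda>g. csg g b) E" if "b \<in> B" for b
  proof
    fix g h assume gh: "g \<in> E" "h \<in> E" "csg g b = csg h b"
    obtain i where i: "i < n" "b = int (N + i)" using \<open>b \<in> B\<close> unfolding B_def by blast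
    have le: "0 < N + i" "N + i \<le> length (W g)" "N + i \<le> length (W h)"
      using Wl(2)[OF gh(1)] Wl(2)[OF gh(2)] i n N(1) l_def by auto
    have "accepts M (take (N + i) (W g) @ drop (N + i) (W h))"
      by (rule cp_words[OF le accW[OF gh(1)] accW[OF gh(2)]]) (use gh(3) i in \<open>simp add: csg_def\<close>)
    moreover have w3: "take (N + i) (W g) @ drop (N + i) (W h) \<in> lists S"
      using Wl(1)[OF gh(1)] Wl(1)[OF gh(2)] by (auto dest: in_set_takeD in_set_dropD)
    ultimately have "take (N + i) (W g) @ drop (N + i) (W h) \<in> word_problem G S"
      using d unfolding decides_in_time_def by blast
    then have e3: "word_eval G (take (N + i) (W g) @ drop (N + i) (W h)) = \<one>\<^bsub>G\<^esub>"
      unfolding word_problem_def by simp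
    have e2: "word_eval G (take (N + i) (W h) @ drop (N + i) (W h)) = \<one>\<^bsub>G\<^esub>"
      using Wl(3)[OF gh(2)] unfolding word_problem_def by simp
    have tk: "take (N + i) (W x) = u x @ replicate i s0" if "x \<in> E" for x
      using u[OF that] i unfolding W_def p_def by simp
    have cs: "set (W x) \<subseteq> carrier G" if "x \<in> E" for x using Wl(1)[OF that] S(2) by auto
    have "word_eval G (take (N + i) (W g)) = word_eval G (take (N + i) (W h))"
      by (rule mixed_eval[OF G _ _ _ e2 e3]) (use cs gh in \<open>auto dest: in_set_takeD in_set_dropD\<close>)
    then have "word_eval G (u g) \<otimes>\<^bsub>G\<^esub> word_eval G (replicate i s0) =
               word_eval G (u h) \<otimes>\<^bsub>G\<^esub> word_eval G (replicate i s0)"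
    proof -
      have sr: "set (replicate i s0) \<subseteq> carrier G" using s0 S(2) by auto
      have "set (u g) \<subseteq> carrier G" "set (u h) \<subseteq> carrier G" using u[OF gh(1)] u[OF gh(2)] S(2) by auto
      then show ?thesis using \<open>word_eval G (take (N + i) (W g)) = word_eval G (take (N + i) (W h))\<close>
        unfolding tk[OF gh(1)] tk[OF gh(2)]
        by (simp add: group.eval_append[OF G _ sr])
    qed
    moreover have "word_eval G (replicate i s0) \<in> carrier G"
      by (rule group.eval_closed[OF G]) (use s0 S(2) in auto)
    moreover have "set (u g) \<subseteq> carrier G" "set (u h) \<subseteq> carrier G" using u[OF gh(1)] u[OF gh(2)] S(2) by auto
    then have "word_eval G (u g) \<in> carrier G" "word_eval G (u h) \<in> carrier G"
      using group.eval_closed[OF G] by blast+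
    ultimately have "word_eval G (u g) = word_eval G (u h)" using group.right_cancel[OF G] by blast
    then show "g = h" using u[OF gh(1)] u[OF gh(2)] by simp
  qed
  have setQ: "set (csg g b) \<subseteq> Q" if "g \<in> E" for g b
  proof -
    have "set (csg g b) \<subseteq> range (\<lambda>i. fst (tm_run M (W g) (Suc i)))" unfolding csg_def by (rule cs_set)
    also have "\<dots> \<subseteq> Q" using reach[OF wf Wl(1)[OF that]] Q_def by auto
    finally show ?thesis .
  qed
  define L where "L = n div m - 1"
  have count: "L * card E \<le> (\<Sum>g\<in>E. length (csg g b)) + L * r ^ L" if "b \<in> B" for b
    using counting[OF fE inj[OF that] _ fQ cQ, of L] setQ unfolding r_def by blast
  have time: "(\<Sum>b\<in>B. length (csg g b)) \<le> T l" if "g \<in> E" for g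
    unfolding csg_def by (rule cs_sum_le[OF isrun_tm_run fB])
  have "n * (L * card E) = (\<Sum>b\<in>B. L * card E)" using cB by simp
  also have "\<dots> \<le> (\<Sum>b\<in>B. (\<Sum>g\<in>E. length (csg g b)) + L * r ^ L)" by (rule sum_mono) (use count in blast)
  also have "\<dots> = (\<Sum>g\<in>E. \<Sum>b\<in>B. length (csg g b)) + n * (L * r ^ L)"
    using cB by (simp add: sum.distrib sum.swap[of _ B E])
  also have "\<dots> \<le> (\<Sum>g\<in>E. T l) + n * (L * r ^ L)" by (intro add_mono sum_mono) (use time in auto)
  finally have main: "n * (L * card E) \<le> card E * T l + n * (L * r ^ L)" by simp
  have "4 * real r ^ L \<le> a ^ n"
    unfolding L_def by (rule pow_bound) (use m a(1) m0 n r_def in auto)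
  then have "2 * real r ^ L \<le> real (card E)" using N(2) E_def by simp
  then have "real (2 * r ^ L) \<le> real (card E)" by simp
  then have rL: "2 * r ^ L \<le> card E" by (simp only: of_nat_le_iff)
  have "2 * (n * (L * card E)) \<le> 2 * (card E * T l) + n * L * (2 * r ^ L)" using main by simp
  also have "\<dots> \<le> 2 * (card E * T l) + n * L * card E" using rL by simp
  finally have "n * L * card E \<le> 2 * T l * card E" by (simp add: algebra_simps)
  moreover have "card E > 0"
  proof -
    have "a ^ n > 0" using a(1) by simp
    then have "real (card E) > 0" using N(2) unfolding E_def by linarith
    then show ?thesis by simp
  qed
  ultimately have nL: "n * L \<le> 2 * T l" by simp
  have "l \<ge> n0" unfolding l_def using n N(1) by auto
  then have Tl: "real (T l) \<le> \<epsilon> * real l ^ 2" by (rule n0)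
  have r1: "real (n * (n div m - 1)) \<le> 2 * real (T l)"
  proof -
    have "real (n * L) \<le> real (2 * T l)" using nL by (simp only: of_nat_le_iff)
    then show ?thesis unfolding L_def by simp
  qed
  have l6: "l \<le> 6 * n" unfolding l_def using N(1) n(3) by auto
  show False by (rule final_arith[OF m0 n(2) r1 Tl[unfolded \<epsilon>_def] l6])
qed

end
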